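(* Let $R$ be a commutative unital ring, and equip the category $\mathfrak{FdgMod}_R$ of filtered cochain complexes of $R$-modules with the model structure whose generating trivial cofibrations are $J=\{0\to D_R(n,p)\}_{n\in\mathbb Z,p\in\mathbb N}$ (so fibrations are the maps with the right lifting property with respect to $J$). Then a morphism $p:(M,F)\to(N,F)$ is a fibration if and only if $F^kp^n:F^kM^n\to F^kN^n$ is surjective for all $k\in\mathbb N$ and all $n\in\mathbb Z$.
   Context: A filtered cochain complex $(M,F)$ is a cochain complex $M$ of $R$-modules with a decreasing filtration by subcomplexes $F^kM$, $k\in\mathbb N$, $F^0M=M$; morphisms are filtration-preserving cochain maps. $D_R(n)$ is the complex with $R$ in degrees $n,n+1$ and identity differential between them; $D_R(n,p)$ is $D_R(n)$ with $F^k=D_R(n)$ for $k\le p$ and $F^k=0$ for $k>p$. *)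

theory Defs
  imports Main "HOL.Modules"
begin

text \<open>The modules M^n live as submodules of an ambient R-module (type 'm with scalar
  multiplication scl); car n is M^n, dif n is the differential M^n \<rightarrow> M^(n+1),
  filt k n is F^k M^n.\<close>

record ('r, 'm) fcc =
  scl :: "'r \<Rightarrow> 'm \<Rightarrow> 'm"
  car :: "int \<Rightarrow> 'm set"
  dif :: "int \<Rightarrow> 'm \<Rightarrow> 'm"
  filt :: "nat \<Rightarrow> int \<Rightarrow> 'm set"

definition submod :: "('r::comm_ring_1 \<Rightarrow> 'm::ab_group_add \<Rightarrow> 'm) \<Rightarrow> 'm set \<Rightarrow> bool" where
  "submod s S \<longleftrightarrow> 0 \<in> S \<and> (\<forall>x\<in>S. \<forall>y\<in>S. x + y \<in> S) \<and> (\<forall>x\<in>S. - x \<in> S)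
     \<and> (\<forall>r. \<forall>x\<in>S. s r x \<in> S)"

definition Rlinear_on :: "('r::comm_ring_1 \<Rightarrow> 'm::ab_group_add \<Rightarrow> 'm) \<Rightarrow> ('r \<Rightarrow> 'n::ab_group_add \<Rightarrow> 'n)
    \<Rightarrow> 'm set \<Rightarrow> ('m \<Rightarrow> 'n) \<Rightarrow> bool" where
  "Rlinear_on s t S f \<longleftrightarrow> (\<forall>x\<in>S. \<forall>y\<in>S. f (x + y) = f x + f y) \<and> (\<forall>r. \<forall>x\<in>S. f (s r x) = t r (f x))"

definition is_fcc :: "('r::comm_ring_1, 'm::ab_group_add) fcc \<Rightarrow> bool" where
  "is_fcc M \<longleftrightarrow> Modules.module (scl M)
     \<and> (\<forall>n. submod (scl M) (car M n))
     \<and> (\<forall>n. Rlinear_on (scl M) (scl M) (car M n) (dif M n))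
     \<and> (\<forall>n. \<forall>x\<in>car M n. dif M n x \<in> car M (n + 1))
     \<and> (\<forall>n. \<forall>x\<in>car M n. dif M (n + 1) (dif M n x) = 0)
     \<and> (\<forall>n. filt M 0 n = car M n)
     \<and> (\<forall>k n. submod (scl M) (filt M k n))
     \<and> (\<forall>k n. filt M (Suc k) n \<subseteq> filt M k n)
     \<and> (\<forall>k n. \<forall>x\<in>filt M k n. dif M n x \<in> filt M k (n + 1))"

text \<open>Morphisms: filtration-preserving cochain maps (given degreewise, relevant only on carriers).\<close>

definition fmor :: "('r::comm_ring_1, 'm::ab_group_add) fcc \<Rightarrow> ('r, 'n::ab_group_add) fcc
    \<Rightarrow> (int \<Rightarrow> 'm \<Rightarrow> 'n) \<Rightarrow> bool" where
  "fmor M N f \<longleftrightarrow> (\<forall>n. Rlinear_on (scl M) (scl N) (car M n) (f n))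
     \<and> (\<forall>k n. \<forall>x\<in>filt M k n. f n x \<in> filt N k n)
     \<and> (\<forall>n. \<forall>x\<in>car M n. f (n + 1) (dif M n x) = dif N n (f n x))"

definition zero_fcc :: "('r::comm_ring_1, 'r) fcc" where
  "zero_fcc = \<lparr>scl = (*), car = (\<lambda>_. {0}), dif = (\<lambda>_ _. 0), filt = (\<lambda>_ _. {0})\<rparr>"

definition disc_fcc :: "int \<Rightarrow> nat \<Rightarrow> ('r::comm_ring_1, 'r) fcc" where
  "disc_fcc n p =
     \<lparr>scl = (*),
      car = (\<lambda>m. if m = n \<or> m = n + 1 then UNIV else {0}),
      dif = (\<lambda>m. if m = n then id else (\<lambda>_. 0)),
      filt = (\<lambda>k m. if k \<le> p \<and> (m = n \<or> m = n + 1) then UNIV else {0})\<rparr>"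

definition has_rlp :: "('r::comm_ring_1, 'a::ab_group_add) fcc \<Rightarrow> ('r, 'b::ab_group_add) fcc
    \<Rightarrow> (int \<Rightarrow> 'a \<Rightarrow> 'b) \<Rightarrow> ('r, 'm::ab_group_add) fcc \<Rightarrow> ('r, 'n::ab_group_add) fcc
    \<Rightarrow> (int \<Rightarrow> 'm \<Rightarrow> 'n) \<Rightarrow> bool" where
  "has_rlp A B i M N P \<longleftrightarrow>
     (\<forall>u v. fmor A M u \<and> fmor B N v \<and> (\<forall>n. \<forall>x\<in>car A n. P n (u n x) = v n (i n x)) \<longrightarrow>
        (\<exists>h. fmor B M h \<and> (\<forall>n. \<forall>x\<in>car A n. h n (i n x) = u n x)
             \<and> (\<forall>n. \<forall>x\<in>car B n. P n (h n x) = v n x)))"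

definition fibration :: "('r::comm_ring_1, 'm::ab_group_add) fcc \<Rightarrow> ('r, 'n::ab_group_add) fcc
    \<Rightarrow> (int \<Rightarrow> 'm \<Rightarrow> 'n) \<Rightarrow> bool" where
  "fibration M N P \<longleftrightarrow>
     (\<forall>n p. has_rlp (zero_fcc :: ('r, 'r) fcc) (disc_fcc n p) (\<lambda>_ _. 0) M N P)"

end

theory Submission
  imports Defs
begin

lemma lin_zero:
  assumes "Rlinear_on s t S f" "(0::'m::ab_group_add) \<in> S"
  shows "f 0 = (0::'n::ab_group_add)"
proof -
  have "f (0 + 0) = f 0 + f 0" using assms unfolding Rlinear_on_def by blast
  thus ?thesis by simp
qed

lemma filt_mono:
  assumes "is_fcc M" "j \<le> k"
  shows "filt M k n \<subseteq> filt M j n"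
  using assms(2)
proof (induction k)
  case 0 then show ?case by simp
next
  case (Suc k)
  have s: "filt M (Suc k) n \<subseteq> filt M k n" using assms(1) unfolding is_fcc_def by blast
  show ?case
  proof (cases "j = Suc k")
    case True then show ?thesis by simp
  next
    case False then have "j \<le> k" using Suc by simp
    then show ?thesis using Suc s by blast
  qed
qed

lemma filt_car:
  assumes "is_fcc M"
  shows "filt M k n \<subseteq> car M n"
  using filt_mono[OF assms, of 0 k n] assms unfolding is_fcc_def by simp

lemma fcc_zero_filt: "is_fcc M \<Longrightarrow> 0 \<in> filt M k n"
  unfolding is_fcc_def submod_def by blast

lemma fcc_scl_filt: "is_fcc M \<Longrightarrow> x \<in> filt M k n \<Longrightarrow> scl M r x \<in> filt M k n"
  unfolding is_fcc_def submod_def by blast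

lemma fcc_dif_filt: "is_fcc M \<Longrightarrow> x \<in> filt M k n \<Longrightarrow> dif M n x \<in> filt M k (n+1)"
  unfolding is_fcc_def by blast

lemma fcc_dif_lin: "is_fcc M \<Longrightarrow> x \<in> car M n \<Longrightarrow> dif M n (scl M r x) = scl M r (dif M n x)"
  unfolding is_fcc_def Rlinear_on_def by blast

lemma fcc_dif_lin_add: "is_fcc M \<Longrightarrow> x \<in> car M n \<Longrightarrow> y \<in> car M n \<Longrightarrow> dif M n (x + y) = dif M n x + dif M n y"
  unfolding is_fcc_def Rlinear_on_def by blast

lemma car_zero: "is_fcc M \<Longrightarrow> 0 \<in> car M n"
proof -
  assume "is_fcc M"
  then have "submod (scl M) (car M n)" unfolding is_fcc_def by blast
  then show ?thesis unfolding submod_def by blast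
qed

lemma fcc_dif0: "is_fcc M \<Longrightarrow> dif M n 0 = 0"
proof -
  assume M: "is_fcc M"
  have "Rlinear_on (scl M) (scl M) (car M n) (dif M n)" using M unfolding is_fcc_def by blast
  moreover have "0 \<in> car M n" using car_zero[OF M] .
  ultimately show ?thesis by (rule lin_zero)
qed

lemma fcc_dd: "is_fcc M \<Longrightarrow> x \<in> car M n \<Longrightarrow> dif M (n+1) (dif M n x) = 0"
  unfolding is_fcc_def by blast

lemma fcc_mod: "is_fcc M \<Longrightarrow> module (scl M)"
  unfolding is_fcc_def by blast

lemma fcc_car_dif: "is_fcc M \<Longrightarrow> x \<in> car M n \<Longrightarrow> dif M n x \<in> car M (n+1)"
  unfolding is_fcc_def by blast

lemma fmor_zero: "is_fcc M \<Longrightarrow> fmor M N f \<Longrightarrow> f n 0 = 0"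
proof -
  assume M: "is_fcc M" and f: "fmor M N f"
  have "Rlinear_on (scl M) (scl N) (car M n) (f n)" using f unfolding fmor_def by blast
  moreover have "0 \<in> car M n" using car_zero[OF M] .
  ultimately show ?thesis by (rule lin_zero)
qed

lemma fmor_scl: "fmor M N f \<Longrightarrow> x \<in> car M n \<Longrightarrow> f n (scl M r x) = scl N r (f n x)"
  unfolding fmor_def Rlinear_on_def by blast

lemma fmor_dif: "fmor M N f \<Longrightarrow> x \<in> car M n \<Longrightarrow> f (n+1) (dif M n x) = dif N n (f n x)"
  unfolding fmor_def by blast

lemma fmor_filt: "fmor M N f \<Longrightarrow> x \<in> filt M k n \<Longrightarrow> f n x \<in> filt N k n"
  unfolding fmor_def by blast

definition discmap :: "('r::comm_ring_1, 'm::ab_group_add) fcc \<Rightarrow> int \<Rightarrow> 'm \<Rightarrow> int \<Rightarrow> 'r \<Rightarrow> 'm" where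
  "discmap M n y = (\<lambda>m r. if m = n then scl M r y else if m = n + 1 then scl M r (dif M n y) else 0)"

lemma discmap_fmor:
  assumes M: "is_fcc M" and y: "y \<in> filt M p n"
  shows "fmor (disc_fcc n p) M (discmap M n y)"
proof -
  interpret module "scl M" using fcc_mod[OF M] .
  have yc: "y \<in> car M n" using filt_car[OF M] y by blast
  have dy: "dif M n y \<in> filt M p (n+1)" using fcc_dif_filt[OF M y] .
  have dyc: "dif M n y \<in> car M (n+1)" using fcc_car_dif[OF M yc] .
  have lin: "Rlinear_on (scl (disc_fcc n p)) (scl M) (car (disc_fcc n p) m) (discmap M n y m)" for m
    unfolding Rlinear_on_def disc_fcc_def discmap_def
    by (auto simp: scale_left_distrib mult.commute)
  have filt: "discmap M n y m x \<in> filt M k m" if "x \<in> filt (disc_fcc n p) k m" for k m x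
  proof (cases "k \<le> p \<and> (m = n \<or> m = n + 1)")
    case True
    then have "filt M p m \<subseteq> filt M k m" using filt_mono[OF M] by blast
    with True y dy show ?thesis unfolding discmap_def
      using fcc_scl_filt[OF M] by (auto)
  next
    case False
    then have "x = 0" using that unfolding disc_fcc_def by auto
    then show ?thesis unfolding discmap_def using fcc_zero_filt[OF M] by auto
  qed
  have com: "discmap M n y (m + 1) (dif (disc_fcc n p) m x) = dif M m (discmap M n y m x)"
    if "x \<in> car (disc_fcc n p) m" for m x
  proof -
    consider "m = n" | "m = n + 1" | "m + 1 = n" | "m \<noteq> n \<and> m \<noteq> n + 1 \<and> m + 1 \<noteq> n" by blast
    then show ?thesis
    proof cases
      case 1 then show ?thesis unfolding discmap_def disc_fcc_def
        using fcc_dif_lin[OF M yc] by simp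
    next
      case 2 then show ?thesis unfolding discmap_def disc_fcc_def
        using fcc_dd[OF M yc] fcc_dif_lin[OF M dyc] by (simp add: scale_zero_right)
    next
      case 3
      then have "x = 0" using that unfolding disc_fcc_def by auto
      with 3 show ?thesis unfolding discmap_def disc_fcc_def
        using fcc_dif0[OF M] by simp
    next
      case 4
      then have "x = 0" using that unfolding disc_fcc_def by auto
      with 4 show ?thesis unfolding discmap_def disc_fcc_def
        using fcc_dif0[OF M] by auto
    qed
  qed
  show ?thesis unfolding fmor_def using lin filt com by blast
qed

lemma zero_fmor:
  assumes M: "is_fcc M"
  shows "fmor (zero_fcc :: ('r::comm_ring_1, 'r) fcc) M (\<lambda>_ _. 0)"
  unfolding fmor_def zero_fcc_def Rlinear_on_def
  using fcc_zero_filt[OF M] fcc_dif0[OF M] M unfolding is_fcc_def submod_def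
  by (auto simp: module.scale_zero_right)

theorem proposition1p19:
  fixes M :: "('r::comm_ring_1, 'm::ab_group_add) fcc"
    and N :: "('r, 'n::ab_group_add) fcc"
    and P :: "int \<Rightarrow> 'm \<Rightarrow> 'n"
  assumes "is_fcc M" and "is_fcc N" and "fmor M N P"
  shows "fibration M N P \<longleftrightarrow> (\<forall>k n. P n ` filt M k n = filt N k n)"
proof
  assume fib: "fibration M N P"
  show "\<forall>k n. P n ` filt M k n = filt N k n"
  proof (intro allI equalityI subsetI)
    fix k n z assume "z \<in> P n ` filt M k n"
    then show "z \<in> filt N k n" using fmor_filt[OF assms(3)] by blast
  next
    fix k n y assume y: "y \<in> filt N k n"
    interpret N: module "scl N" using fcc_mod[OF assms(2)] .
    have rlp: "has_rlp (zero_fcc :: ('r, 'r) fcc) (disc_fcc n k) (\<lambda>_ _. 0) M N P"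
      using fib unfolding fibration_def by blast
    have u: "fmor (zero_fcc :: ('r, 'r) fcc) M (\<lambda>_ _. 0)" using zero_fmor[OF assms(1)] .
    have v: "fmor (disc_fcc n k) N (discmap N n y)" using discmap_fmor[OF assms(2) y] .
    have c: "\<forall>m. \<forall>x\<in>car (zero_fcc :: ('r, 'r) fcc) m. P m 0 = discmap N n y m 0"
      using fmor_zero[OF assms(1,3)] unfolding discmap_def
      by (simp add: N.scale_zero_right)
    obtain h where h: "fmor (disc_fcc n k) M h"
      and hP: "\<forall>m. \<forall>x\<in>car (disc_fcc n k) m. P m (h m x) = discmap N n y m x"
      using rlp u v c unfolding has_rlp_def by blast
    have "(1::'r) \<in> filt (disc_fcc n k) k n" unfolding disc_fcc_def by simp
    then have "h n 1 \<in> filt M k n" using fmor_filt[OF h] by blast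
    moreover have "P n (h n 1) = y" using hP unfolding disc_fcc_def discmap_def by simp
    ultimately show "y \<in> P n ` filt M k n" by force
  qed
next
  assume surj: "\<forall>k n. P n ` filt M k n = filt N k n"
  show "fibration M N P"
    unfolding fibration_def has_rlp_def
  proof (intro allI impI)
    fix n p u v
    assume a: "fmor (zero_fcc :: ('r, 'r) fcc) M u \<and> fmor (disc_fcc n p) N v \<and>
       (\<forall>m. \<forall>x\<in>car (zero_fcc :: ('r, 'r) fcc) m. P m (u m x) = v m 0)"
    interpret M: module "scl M" using fcc_mod[OF assms(1)] .
    interpret N: module "scl N" using fcc_mod[OF assms(2)] .
    have v: "fmor (disc_fcc n p) N v" using a by blast
    have u0: "u m 0 = 0" for m
    proof -
      have "fmor (zero_fcc :: ('r, 'r) fcc) M u" using a by blast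
      then have "Rlinear_on (*) (scl M) {0::'r} (u m)"
        unfolding fmor_def zero_fcc_def by simp
      then show ?thesis using lin_zero by blast
    qed
    have "v n 1 \<in> filt N p n" using fmor_filt[OF v, of 1 p n] unfolding disc_fcc_def by simp
    then have "v n 1 \<in> P n ` filt M p n" using surj by simp
    then obtain x where x: "x \<in> filt M p n" and Px: "P n x = v n 1" by (metis imageE)
    have xc: "x \<in> car M n" using filt_car[OF assms(1)] x by blast
    have vn: "v n r = scl N r (v n 1)" for r
      using fmor_scl[OF v, of 1 n r] unfolding disc_fcc_def by simp
    have vn1: "v (n+1) r = dif N n (v n r)" for r
      using fmor_dif[OF v, of r n] unfolding disc_fcc_def by simp
    have v0: "v m 0 = 0" for m
    proof -
      have "Rlinear_on (*) (scl N) (car (disc_fcc n p) m) (v m)"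
        using v unfolding fmor_def disc_fcc_def by simp
      moreover have "(0::'r) \<in> car (disc_fcc n p) m" unfolding disc_fcc_def by simp
      ultimately show ?thesis using lin_zero by blast
    qed
    have vc: "v n 1 \<in> car N n" using \<open>v n 1 \<in> filt N p n\<close> filt_car[OF assms(2)] by blast
    show "\<exists>h. fmor (disc_fcc n p) M h \<and> (\<forall>m. \<forall>x\<in>car (zero_fcc :: ('r, 'r) fcc) m. h m 0 = u m x)
             \<and> (\<forall>m. \<forall>x\<in>car (disc_fcc n p) m. P m (h m x) = v m x)"
    proof (intro exI conjI allI ballI)
      show "fmor (disc_fcc n p) M (discmap M n x)" using discmap_fmor[OF assms(1) x] .
    next
      fix m z assume "z \<in> car (zero_fcc :: ('r, 'r) fcc) m"
      then have "z = 0" unfolding zero_fcc_def by simp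
      then show "discmap M n x m 0 = u m z" using u0 unfolding discmap_def
        by (simp add: M.scale_zero_right)
    next
      fix m and r :: 'r assume r: "r \<in> car (disc_fcc n p) m"
      consider "m = n" | "m = n + 1" | "m \<noteq> n \<and> m \<noteq> n + 1" by blast
      then show "P m (discmap M n x m r) = v m r"
      proof cases
        case 1 then show ?thesis unfolding discmap_def
          using fmor_scl[OF assms(3) xc] Px vn[of r] by simp
      next
        case 2
        have "P (n+1) (scl M r (dif M n x)) = scl N r (P (n+1) (dif M n x))"
          using fmor_scl[OF assms(3) fcc_car_dif[OF assms(1) xc]] .
        also have "\<dots> = scl N r (dif N n (v n 1))" using fmor_dif[OF assms(3) xc] Px by simp
        also have "\<dots> = dif N n (v n r)" using fcc_dif_lin[OF assms(2) vc] vn[of r] by simp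
        also have "\<dots> = v (n+1) r" using vn1[of r] by simp
        finally show ?thesis using 2 unfolding discmap_def by simp
      next
        case 3
        then have "r = 0" using r unfolding disc_fcc_def by auto
        with 3 show ?thesis unfolding discmap_def using v0 fmor_zero[OF assms(1,3)] by simp
      qed
    qed
  qed
qed

end
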